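(* Let $r\in\mathbb{N}$ and $w,v\in\mathbb{YF}^r$. Write $\underline{x}=s(x)$ and $h=h(w,v)$. 1) If $\mathbb{1}_{w,v}=1$, then $$d_r(w,v)=\sum_{l=0}^{h}\big(d_1(\underline{w}[l],\underline{v}[l])-d_1(\underline{w}[l+1],\underline{v}[l+1])\big)\, r^{\#v-\#w-e(v[l])}.$$ 2) If $\mathbb{1}_{w,v}=0$, then $$d_r(w,v)=\sum_{l=0}^{h-1}\big(d_1(\underline{w}[l],\underline{v}[l])-d_1(\underline{w}[l+1],\underline{v}[l+1])\big)\, r^{\#v-\#w-e(v[l])}+d_1(\underline{w_v},\underline{v_w})\, r^{\#v-\#w-e(v_w)}.$$
   Context: Fix $r\in\mathbb{N}$. Words and statistics. Consider finite words over $\{1_1,\dots,1_r,2\}$. A letter $1_i$ is a one with digit value $1$; $2$ is a two with digit value $2$. $|x|$ is the sum of digit values, $\#x$ the number of letters, $e(x)$ the number of ones. The graph $\mathbb{YF}^r$. It is the graded graph on all finite words, graded by $|\cdot|$. From $x$ there is a downward edge to every word obtained by one of two operations: (i) delete the leftmost one; (ii) replace a $2$ lying left of the leftmost one (any $2$ if there are no ones) by $1_i$, with arbitrary $i$. $\mathbb{YF}=\mathbb{YF}^1$ (with $1:=1_1$). $s$ replaces every $1_i$ by $1$. Path counts. $d_r(x,y)$ is the number of downward paths $y=y_n\to\dots\to y_m=x$ with $|y_i|=i$ ($0$ if none); $d_1$ is the count in $\mathbb{YF}$. Suffix notation. $h(w,v)$ is the length (in letters) of the longest common suffix of $w,v$,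 where $1_i\ne1_j$ for $i\neq j$. $w_v$, $v_w$ are $w$, $v$ with that suffix deleted. $\mathbb{1}_{w,v}=1$ if $w_v$ and $v_w$ both end with ones of different indices, else $0$. $x[l]$ is $x$ with its last $l$ letters deleted. *)

theory Defs
  imports Complex_Main
begin

text \<open>Letters: One i stands for the one 1_i, Two for the two.
  Words are lists, read left to right (index 0 = leftmost letter).\<close>

datatype letter = One nat | Two

fun is_one :: "letter \<Rightarrow> bool" where
  "is_one (One i) = True"
| "is_one Two = False"

fun val :: "letter \<Rightarrow> nat" where
  "val (One i) = 1"
| "val Two = 2"

text \<open>A word of YF^r: every one has index in {1..r}.\<close>
definition valid_word :: "nat \<Rightarrow> letter list \<Rightarrow> bool" where
  "valid_word r x = (\<forall>a \<in> set x. case a of One i \<Rightarrow> 1 \<le> i \<and> i \<le> r | Two \<Rightarrow> True)"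

definition weight :: "letter list \<Rightarrow> nat" where
  "weight x = sum_list (map val x)"

definition nletters :: "letter list \<Rightarrow> nat" where
  "nletters x = length x"

definition e :: "letter list \<Rightarrow> nat" where
  "e x = length (filter is_one x)"

definition s :: "letter list \<Rightarrow> letter list" where
  "s x = map (\<lambda>a. case a of One i \<Rightarrow> One 1 | Two \<Rightarrow> Two) x"

definition down :: "nat \<Rightarrow> letter list \<Rightarrow> letter list set" where
  "down r x =
     {y. \<exists>k < length x. is_one (x ! k) \<and> (\<forall>j<k. \<not> is_one (x ! j))
            \<and> y = take k x @ drop (Suc k) x}
   \<union> {y. \<exists>k < length x. \<exists>i. x ! k = Two \<and> (\<forall>j<k. \<not> is_one (x ! j))
            \<and> 1 \<le> i \<and> i \<le> r \<and> y = x[k := One i]}"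

text \<open>Downward paths from y to x: y = p!0 \<rightarrow> p!1 \<rightarrow> ... \<rightarrow> last p = x.
  (Each edge lowers the weight by exactly one, so the grading condition is automatic.)\<close>
definition down_paths :: "nat \<Rightarrow> letter list \<Rightarrow> letter list \<Rightarrow> letter list list set" where
  "down_paths r x y = {p. p \<noteq> [] \<and> hd p = y \<and> last p = x \<and>
       (\<forall>i. Suc i < length p \<longrightarrow> p ! Suc i \<in> down r (p ! i))}"

definition d :: "nat \<Rightarrow> letter list \<Rightarrow> letter list \<Rightarrow> nat" where
  "d r x y = card (down_paths r x y)"

fun lcp :: "'a list \<Rightarrow> 'a list \<Rightarrow> nat" where
  "lcp (a # as) (b # bs) = (if a = b then Suc (lcp as bs) else 0)"
| "lcp _ _ = 0"

definition h :: "letter list \<Rightarrow> letter list \<Rightarrow> nat" where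
  "h w v = lcp (rev w) (rev v)"

text \<open>w_v: w with the common suffix of w and v deleted.\<close>
definition strip :: "letter list \<Rightarrow> letter list \<Rightarrow> letter list" where
  "strip w v = take (length w - h w v) w"

definition cut :: "letter list \<Rightarrow> nat \<Rightarrow> letter list" where
  "cut x l = take (length x - l) x"

definition ind :: "letter list \<Rightarrow> letter list \<Rightarrow> bool" where
  "ind w v = (strip w v \<noteq> [] \<and> strip v w \<noteq> [] \<and>
     (\<exists>i j. last (strip w v) = One i \<and> last (strip v w) = One j \<and> i \<noteq> j))"

end

theory Submission
  imports Defs
begin


lemma down_Nil: "down r [] = {}"
  by (simp add: down_def)

lemma down_One: "down r (One i # u) = {u}"
proof -
  have 1: "{y. \<exists>k < length (One i # u). is_one ((One i # u) ! k) \<and> (\<forall>j<k. \<not> is_one ((One i # u) ! j))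
            \<and> y = take k (One i # u) @ drop (Suc k) (One i # u)} = {u}"
    apply (rule set_eqI, rule iffI)
     apply clarsimp
     apply (case_tac k, auto)
    done
  have 2: "{y. \<exists>k < length (One i # u). \<exists>ii. (One i # u) ! k = Two \<and> (\<forall>j<k. \<not> is_one ((One i # u) ! j))
            \<and> 1 \<le> ii \<and> ii \<le> r \<and> y = (One i # u)[k := One ii]} = {}"
    apply auto
    apply (case_tac k, auto)
    done
  show ?thesis unfolding down_def 1 2 by simp
qed

lemma down_Two: "down r (Two # u) = {One j # u | j. 1 \<le> j \<and> j \<le> r} \<union> Cons Two ` down r u"
proof -
  let ?x = "Two # u"
  have 1: "{y. \<exists>k < length ?x. is_one (?x ! k) \<and> (\<forall>j<k. \<not> is_one (?x ! j))
            \<and> y = take k ?x @ drop (Suc k) ?x} = Cons Two ` {y. \<exists>k < length u. is_one (u ! k) \<and> (\<forall>j<k. \<not> is_one (u ! j))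
            \<and> y = take k u @ drop (Suc k) u}" (is "?L = ?R")
  proof
    show "?L \<subseteq> ?R"
    proof
      fix y assume "y \<in> ?L"
      then obtain k where k: "k < length ?x" "is_one (?x ! k)" "\<forall>j<k. \<not> is_one (?x ! j)"
        "y = take k ?x @ drop (Suc k) ?x" by blast
      then obtain k' where k': "k = Suc k'" by (cases k) auto
      have "\<forall>j<k'. \<not> is_one (u ! j)"
      proof (intro allI impI)
        fix j assume "j < k'" then show "\<not> is_one (u ! j)" using k(3) k' by (metis Suc_mono nth_Cons_Suc)
      qed
      then show "y \<in> ?R" using k k' by auto
    qed
  next
    show "?R \<subseteq> ?L"
    proof
      fix y assume "y \<in> ?R"
      then obtain k where k: "k < length u" "is_one (u ! k)" "\<forall>j<k. \<not> is_one (u ! j)"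
        "y = Two # (take k u @ drop (Suc k) u)" by blast
      have "\<forall>j<Suc k. \<not> is_one (?x ! j)"
        using k(3) by (auto simp: less_Suc_eq_0_disj)
      then show "y \<in> ?L" using k by (intro CollectI exI[of _ "Suc k"]) auto
    qed
  qed
  have 2: "{y. \<exists>k < length ?x. \<exists>ii. ?x ! k = Two \<and> (\<forall>j<k. \<not> is_one (?x ! j))
            \<and> 1 \<le> ii \<and> ii \<le> r \<and> y = ?x[k := One ii]} = {One j # u | j. 1 \<le> j \<and> j \<le> r} \<union> Cons Two ` {y. \<exists>k < length u. \<exists>i. u ! k = Two \<and> (\<forall>j<k. \<not> is_one (u ! j))
            \<and> 1 \<le> i \<and> i \<le> r \<and> y = u[k := One i]}" (is "?L = ?R")
  proof
    show "?L \<subseteq> ?R"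
    proof
      fix y assume "y \<in> ?L"
      then obtain k ii where k: "k < length ?x" "?x ! k = Two" "\<forall>j<k. \<not> is_one (?x ! j)"
        "1 \<le> ii" "ii \<le> r" "y = ?x[k := One ii]" by blast
      show "y \<in> ?R"
      proof (cases k)
        case 0 then show ?thesis using k by auto
      next
        case (Suc k')
        have "\<forall>j<k'. \<not> is_one (u ! j)"
        proof (intro allI impI)
          fix j assume "j < k'" then show "\<not> is_one (u ! j)" using k(3) Suc by (metis Suc_mono nth_Cons_Suc)
        qed
        then show ?thesis using k Suc by auto
      qed
    qed
  next
    show "?R \<subseteq> ?L"
    proof
      fix y assume "y \<in> ?R"
      then consider (a) j where "1 \<le> j" "j \<le> r" "y = One j # u"
        | (b) k i where "k < length u" "u ! k = Two" "\<forall>j<k. \<not> is_one (u ! j)" "1 \<le> i" "i \<le> r"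
        "y = Two # u[k := One i]" by blast
      then show "y \<in> ?L"
      proof cases
        case a then show ?thesis by (intro CollectI exI[of _ 0]) auto
      next
        case b
        have "\<forall>j<Suc k. \<not> is_one (?x ! j)"
          using b(3) by (auto simp: less_Suc_eq_0_disj)
        then show ?thesis using b by (intro CollectI exI[of _ "Suc k"]) auto
      qed
    qed
  qed
  show ?thesis unfolding down_def 1 2 by (simp add: image_Un Un_ac)
qed



lemma finite_down: "finite (down r x)"
proof (induction x)
  case Nil then show ?case by (simp add: down_Nil)
next
  case (Cons a u) then show ?case
  proof (cases a)
    case (One i) then show ?thesis by (simp add: down_One)
  next
    case Two
    have "{One j # u | j. 1 \<le> j \<and> j \<le> r} = (\<lambda>j. One j # u) ` {1..r}" by auto
    then show ?thesis using Two Cons by (simp add: down_Two)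
  qed
qed

lemma weight_Cons[simp]: "weight (a # x) = val a + weight x"
  by (simp add: weight_def)
lemma weight_Nil[simp]: "weight [] = 0"
  by (simp add: weight_def)
lemma weight_app[simp]: "weight (x @ y) = weight x + weight y"
  by (simp add: weight_def)

lemma weight_down: "c \<in> down r x \<Longrightarrow> Suc (weight c) = weight x"
proof (induction x arbitrary: c)
  case Nil then show ?case by (simp add: down_Nil)
next
  case (Cons a u) then show ?case
  proof (cases a)
    case (One i) then show ?thesis using Cons by (simp add: down_One)
  next
    case Two
    then show ?thesis using Cons by (auto simp add: down_Two)
  qed
qed

definition touch :: "nat \<Rightarrow> letter list \<Rightarrow> letter \<Rightarrow> letter list set" where
  "touch r x a = (if set x \<subseteq> {Two} then (case a of One i \<Rightarrow> {x} | Two \<Rightarrow> {x @ [One j] | j. 1 \<le> j \<and> j \<le> r}) else {})"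

lemma down_snoc: "down r (x @ [a]) = (\<lambda>c. c @ [a]) ` down r x \<union> touch r x a"
proof (induction x)
  case Nil then show ?case
    by (cases a) (auto simp: down_Nil down_One down_Two touch_def)
next
  case (Cons b u) then show ?case
  proof (cases b)
    case (One i) then show ?thesis by (simp add: down_One touch_def)
  next
    case Two
    have "down r ((b # u) @ [a]) = {One j # u @ [a] | j. 1 \<le> j \<and> j \<le> r} \<union> Cons Two ` down r (u @ [a])"
      using Two by (simp add: down_Two)
    also have "\<dots> = {One j # u @ [a] | j. 1 \<le> j \<and> j \<le> r} \<union> Cons Two ` ((\<lambda>c. c @ [a]) ` down r u \<union> touch r u a)"
      using Cons by simp
    also have "\<dots> = (\<lambda>c. c @ [a]) ` down r (b # u) \<union> touch r (b # u) a"
      using Two by (cases a) (auto simp: down_Two touch_def image_Un)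
    finally show ?thesis .
  qed
qed

lemma sum_down_snoc:
  fixes f :: "letter list \<Rightarrow> 'b::comm_monoid_add"
  shows "(\<Sum>c\<in>down r (x @ [a]). f c) = (\<Sum>c\<in>down r x. f (c @ [a]))
     + (if set x \<subseteq> {Two} then (case a of One i \<Rightarrow> f x | Two \<Rightarrow> (\<Sum>j\<in>{1..r}. f (x @ [One j]))) else 0)"
proof -
  have fin: "finite (touch r x a)"
    by (cases a) (auto simp: touch_def)
  have disj: "(\<lambda>c. c @ [a]) ` down r x \<inter> touch r x a = {}"
  proof -
    { fix c assume c: "c \<in> down r x" "c @ [a] \<in> touch r x a"
      then have st: "set x \<subseteq> {Two}" by (auto simp: touch_def split: if_splits)
      have False
      proof (cases a)
        case (One i)
        then have "c @ [a] = x" using c st by (simp add: touch_def)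
        then have "a \<in> set x" by auto
        then show False using st One by auto
      next
        case Two
        then obtain j where "c @ [a] = x @ [One j]" using c st by (auto simp: touch_def)
        then show False using Two by simp
      qed }
    then show ?thesis by blast
  qed
  have "(\<Sum>c\<in>down r (x @ [a]). f c) = (\<Sum>c\<in>(\<lambda>c. c @ [a]) ` down r x. f c) + (\<Sum>c\<in>touch r x a. f c)"
    unfolding down_snoc using fin disj finite_down by (simp add: sum.union_disjoint)
  also have "(\<Sum>c\<in>(\<lambda>c. c @ [a]) ` down r x. f c) = (\<Sum>c\<in>down r x. f (c @ [a]))"
    by (subst sum.reindex) (auto simp: inj_on_def)
  also have "(\<Sum>c\<in>touch r x a. f c) = (if set x \<subseteq> {Two} then (case a of One i \<Rightarrow> f x | Two \<Rightarrow> (\<Sum>j\<in>{1..r}. f (x @ [One j]))) else 0)"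
  proof (cases "set x \<subseteq> {Two}")
    case True
    show ?thesis
    proof (cases a)
      case (One i) then show ?thesis using True by (simp add: touch_def)
    next
      case Two
      have "{x @ [One j] | j. 1 \<le> j \<and> j \<le> r} = (\<lambda>j. x @ [One j]) ` {1..r}" by auto
      then show ?thesis using True Two by (simp add: touch_def sum.reindex inj_on_def)
    qed
  qed (simp add: touch_def)
  finally show ?thesis .
qed



lemma paths_eq: "down_paths r w v = (if w = v then {[v]} else {}) \<union> (\<Union>c\<in>down r v. Cons v ` down_paths r w c)"
  (is "?L = ?R")
proof
  show "?L \<subseteq> ?R"
  proof
    fix p assume p: "p \<in> ?L"
    then have ne: "p \<noteq> []" and hd: "hd p = v" and lst: "last p = w"
      and st: "\<forall>i. Suc i < length p \<longrightarrow> p ! Suc i \<in> down r (p ! i)"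
      by (auto simp: down_paths_def)
    obtain q where q: "p = v # q" using ne hd by (cases p) auto
    show "p \<in> ?R"
    proof (cases "q = []")
      case True then show ?thesis using q lst by simp
    next
      case False
      have c: "hd q \<in> down r v" using st[rule_format, of 0] q False by (simp add: hd_conv_nth)
      have "q \<in> down_paths r w (hd q)"
        unfolding down_paths_def
      proof (intro CollectI conjI allI impI)
        show "q \<noteq> []" by fact
        show "hd q = hd q" ..
        show "last q = w" using lst q False by simp
        fix i assume "Suc i < length q"
        then show "q ! Suc i \<in> down r (q ! i)" using st[rule_format, of "Suc i"] q by simp
      qed
      then show ?thesis using q c by blast
    qed
  qed
next
  show "?R \<subseteq> ?L"
  proof
    fix p assume "p \<in> ?R"
    then consider (a) "w = v" "p = [v]" | (b) c q where "c \<in> down r v" "q \<in> down_paths r w c" "p = v # q"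
      by (auto split: if_splits)
    then show "p \<in> ?L"
    proof cases
      case a then show ?thesis by (simp add: down_paths_def)
    next
      case b
      then have qn: "q \<noteq> []" "hd q = c" "last q = w" "\<forall>i. Suc i < length q \<longrightarrow> q ! Suc i \<in> down r (q ! i)"
        by (auto simp: down_paths_def)
      show ?thesis unfolding down_paths_def
      proof (intro CollectI conjI allI impI)
        show "p \<noteq> []" "hd p = v" using b by auto
        show "last p = w" using b qn by simp
        fix i assume i: "Suc i < length p"
        show "p ! Suc i \<in> down r (p ! i)"
        proof (cases i)
          case 0 then show ?thesis using b qn by (simp add: hd_conv_nth)
        next
          case (Suc j) then show ?thesis using b qn i by simp
        qed
      qed
    qed
  qed
qed

lemma finite_paths: "finite (down_paths r w v)"
proof (induction "weight v" arbitrary: v rule: less_induct)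
  case less
  have "\<forall>c\<in>down r v. finite (down_paths r w c)"
    using less weight_down by (metis lessI)
  then show ?case by (subst paths_eq) (simp add: finite_down)
qed

lemma d_rec: "d r w v = (if w = v then 1 else 0) + (\<Sum>c\<in>down r v. d r w c)"
proof -
  have disj1: "(if w = v then {[v]} else {}) \<inter> (\<Union>c\<in>down r v. Cons v ` down_paths r w c) = {}"
    by (auto simp: down_paths_def)
  have fin2: "finite (\<Union>c\<in>down r v. Cons v ` down_paths r w c)"
    by (simp add: finite_down finite_paths)
  have "card (\<Union>c\<in>down r v. Cons v ` down_paths r w c) = (\<Sum>c\<in>down r v. card (Cons v ` down_paths r w c))"
  proof (rule card_UN_disjoint)
    show "finite (down r v)" by (rule finite_down)
    show "\<forall>i\<in>down r v. finite (Cons v ` down_paths r w i)" by (simp add: finite_paths)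
    show "\<forall>i\<in>down r v. \<forall>j\<in>down r v. i \<noteq> j \<longrightarrow> Cons v ` down_paths r w i \<inter> Cons v ` down_paths r w j = {}"
      by (auto simp: down_paths_def)
  qed
  also have "\<dots> = (\<Sum>c\<in>down r v. d r w c)"
    by (simp add: card_image d_def)
  finally have "card (\<Union>c\<in>down r v. Cons v ` down_paths r w c) = (\<Sum>c\<in>down r v. d r w c)" .
  then show ?thesis
    unfolding d_def[of r w v] by (subst paths_eq) (simp add: card_Un_disjoint[OF _ fin2 disj1])
qed



definition twos :: "letter list \<Rightarrow> nat" where
  "twos x = length (filter (\<lambda>a. a = Two) x)"

lemma twos_simps[simp]: "twos [] = 0" "twos (One i # u) = twos u" "twos (Two # u) = Suc (twos u)"
  "twos (x @ y) = twos x + twos y"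
  by (auto simp: twos_def)

lemma s_simps[simp]: "s [] = []" "s (One i # u) = One 1 # s u" "s (Two # u) = Two # s u"
  "s (x @ y) = s x @ s y" "length (s x) = length x"
  by (auto simp: s_def)

lemma s_Nil_iff[simp]: "(s x = []) = (x = [])"
  by (simp add: s_def)

lemma sum_down_Two:
  fixes f :: "letter list \<Rightarrow> 'b::comm_monoid_add"
  shows "(\<Sum>c\<in>down r (Two # u). f c) = (\<Sum>j\<in>{1..r}. f (One j # u)) + (\<Sum>c\<in>down r u. f (Two # c))"
proof -
  have e: "{One j # u | j. 1 \<le> j \<and> j \<le> r} = (\<lambda>j. One j # u) ` {1..r}" by auto
  have disj: "(\<lambda>j. One j # u) ` {1..r} \<inter> Cons Two ` down r u = {}" by auto
  have "(\<Sum>c\<in>down r (Two # u). f c) = (\<Sum>c\<in>(\<lambda>j. One j # u) ` {1..r}. f c) + (\<Sum>c\<in>Cons Two ` down r u. f c)"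
    unfolding down_Two e using disj by (simp add: sum.union_disjoint finite_down)
  also have "\<dots> = (\<Sum>j\<in>{1..r}. f (One j # u)) + (\<Sum>c\<in>down r u. f (Two # c))"
    by (simp add: sum.reindex inj_on_def)
  finally show ?thesis .
qed

lemma sum_lift:
  fixes g :: "letter list \<Rightarrow> real"
  shows "(\<Sum>c\<in>down r x. real r ^ twos c * g (s c)) = real r ^ twos x * (\<Sum>c\<in>down 1 (s x). g c)"
proof (induction x arbitrary: g)
  case Nil then show ?case by (simp add: down_Nil)
next
  case (Cons a u) then show ?case
  proof (cases a)
    case (One i) then show ?thesis by (simp add: down_One)
  next
    case Two
    have "(\<Sum>c\<in>down r (Two # u). real r ^ twos c * g (s c))
       = (\<Sum>j\<in>{1..r}. real r ^ twos u * g (One 1 # s u)) + (\<Sum>c\<in>down r u. real r * (real r ^ twos c * g (Two # s c)))"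
      by (simp add: sum_down_Two mult.assoc)
    also have "\<dots> = real r * real r ^ twos u * g (One 1 # s u) + real r * (real r ^ twos u * (\<Sum>c\<in>down 1 (s u). g (Two # c)))"
      using Cons.IH[of "\<lambda>c. g (Two # c)"] by (simp add: sum_distrib_left[symmetric])
    also have "\<dots> = real r ^ twos (Two # u) * (\<Sum>c\<in>down 1 (s (Two # u)). g c)"
      by (simp add: sum_down_Two algebra_simps)
    finally show ?thesis using Two by simp
  qed
qed



definition LM :: "letter list \<Rightarrow> letter list \<Rightarrow> bool" where
  "LM w v = (w \<noteq> [] \<and> v \<noteq> [] \<and> last w = last v)"

definition Tr :: "nat \<Rightarrow> letter list \<Rightarrow> letter list \<Rightarrow> real" where
  "Tr r w v = real (d r w v) - (if LM w v then real (d r (butlast w) (butlast v)) else 0)"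

definition touchR :: "nat \<Rightarrow> letter list \<Rightarrow> letter list \<Rightarrow> letter \<Rightarrow> real" where
  "touchR r w v' a = (if set v' \<subseteq> {Two} then (case a of One i \<Rightarrow> real (d r w v')
      | Two \<Rightarrow> (\<Sum>j\<in>{1..r}. real (d r w (v' @ [One j])))) else 0)"

lemma d_snoc_real: "real (d r w (v' @ [a])) = (if w = v' @ [a] then 1 else 0)
   + (\<Sum>c\<in>down r v'. real (d r w (c @ [a]))) + touchR r w v' a"
proof -
  have "real (d r w (v' @ [a])) = (if w = v' @ [a] then 1 else 0) + (\<Sum>c\<in>down r (v' @ [a]). real (d r w c))"
    using d_rec[of r w "v' @ [a]"] by (simp add: of_nat_sum)
  also have "(\<Sum>c\<in>down r (v' @ [a]). real (d r w c)) = (\<Sum>c\<in>down r v'. real (d r w (c @ [a]))) + touchR r w v' a"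
    unfolding sum_down_snoc touchR_def by simp
  finally show ?thesis by simp
qed

lemma d_rec_real: "real (d r w v) = (if w = v then 1 else 0) + (\<Sum>c\<in>down r v. real (d r w c))"
  using d_rec[of r w v] by (simp add: of_nat_sum)

lemma EqA: "Tr r w (v' @ [a]) = (\<Sum>c\<in>down r v'. Tr r w (c @ [a])) + touchR r w v' a"
proof (cases "LM w (v' @ [a])")
  case True
  then obtain bw where w: "w = bw @ [a]" unfolding LM_def
    by (metis append_butlast_last_id last_snoc)
  have LMc: "\<And>c. LM w (c @ [a])" using w by (simp add: LM_def)
  have "Tr r w (v' @ [a]) = real (d r w (v' @ [a])) - real (d r bw v')"
    using True w by (simp add: Tr_def)
  also have "\<dots> = (if w = v' @ [a] then 1 else 0) + (\<Sum>c\<in>down r v'. real (d r w (c @ [a]))) + touchR r w v' a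
      - ((if bw = v' then 1 else 0) + (\<Sum>c\<in>down r v'. real (d r bw c)))"
    by (simp only: d_snoc_real[of r w v' a] d_rec_real[of r bw v'])
  also have "\<dots> = (\<Sum>c\<in>down r v'. real (d r w (c @ [a])) - real (d r bw c)) + touchR r w v' a"
    using w by (simp add: sum_subtractf)
  also have "(\<Sum>c\<in>down r v'. real (d r w (c @ [a])) - real (d r bw c)) = (\<Sum>c\<in>down r v'. Tr r w (c @ [a]))"
    using LMc w by (simp add: Tr_def)
  finally show ?thesis .
next
  case False
  have LMc: "\<And>c. \<not> LM w (c @ [a])" using False by (simp add: LM_def)
  have nw: "w \<noteq> v' @ [a]" using False by (auto simp: LM_def)
  show ?thesis using False LMc nw by (simp add: Tr_def d_snoc_real[of r w v' a])
qed



definition sl :: "letter \<Rightarrow> letter" where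
  "sl a = (case a of One i \<Rightarrow> One 1 | Two \<Rightarrow> Two)"

lemma s_single[simp]: "s [a] = [sl a]" by (simp add: s_def sl_def)
lemma sl_simps[simp]: "sl (One i) = One 1" "sl Two = Two" by (auto simp: sl_def)
lemma last_s: "x \<noteq> [] \<Longrightarrow> last (s x) = sl (last x)"
  by (simp add: s_def sl_def last_map)
lemma butlast_s: "butlast (s x) = s (butlast x)"
  by (simp add: s_def map_butlast)
lemma s_rep[simp]: "s (replicate k Two) = replicate k Two"
  by (induction k) auto
lemma twos_rep[simp]: "twos (replicate k Two) = k"
  by (induction k) auto
lemma weight_rep[simp]: "weight (replicate k Two) = 2 * k"
  by (induction k) auto
lemma valid_butlast: "valid_word r w \<Longrightarrow> valid_word r (butlast w)"
  unfolding valid_word_def by (meson in_set_butlastD)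
lemma set_s_Two: "(set (s x) \<subseteq> {Two}) = (set x \<subseteq> {Two})"
proof (induction x)
  case (Cons a u) then show ?case by (cases a) auto
qed simp
lemma allTwo_rep: "set x \<subseteq> {Two} \<Longrightarrow> x = replicate (length x) Two"
  by (induction x) auto

lemma rpowi_split: "(1::nat) \<le> r \<Longrightarrow> real r powi (int n + m) = real r ^ n * real r powi m"
  by (simp add: power_int_add power_int_of_nat)

lemma d_Nil_real: "real (d r w []) = (if w = [] then 1 else 0)"
  using d_rec_real[of r w "[]"] by (simp add: down_Nil)

definition KP :: "nat \<Rightarrow> letter list \<Rightarrow> letter list \<Rightarrow> bool" where
  "KP r w v = (Tr r w v = real r powi (int (twos v) - int (length w)) * Tr 1 (s w) (s v))"

lemma Z_of_K:
  assumes r: "1 \<le> r"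
  shows "(\<And>v w. weight v \<le> 2*k \<Longrightarrow> valid_word r w \<Longrightarrow> KP r w v) \<Longrightarrow> valid_word r x \<Longrightarrow>
    real (d r x (replicate k Two)) = real r powi (int k - int (length x)) * real (d 1 (s x) (replicate k Two))"
proof (induction k arbitrary: x)
  case 0 then show ?case by (simp add: d_Nil_real)
next
  case (Suc k)
  let ?R = "replicate k Two"
  have rep: "replicate (Suc k) Two = ?R @ [Two]" by (simp add: replicate_append_same)
  have K1: "Tr r x (?R @ [Two]) = real r powi (int (Suc k) - int (length x)) * Tr 1 (s x) (?R @ [Two])"
    using Suc.prems(1)[of "?R @ [Two]" x] Suc.prems(2) by (simp add: KP_def)
  show ?case
  proof (cases "x \<noteq> [] \<and> last x = Two")
    case True
    have IH: "real (d r (butlast x) ?R) = real r powi (int k - int (length (butlast x))) * real (d 1 (s (butlast x)) ?R)"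
      using Suc.IH[of "butlast x"] Suc.prems valid_butlast by simp
    have ex: "int k - int (length (butlast x)) = int (Suc k) - int (length x)" using True by (cases x) auto
    have L1: "LM x (?R @ [Two])" using True by (simp add: LM_def)
    have L2: "LM (s x) (?R @ [Two])" using True by (simp add: LM_def last_s)
    show ?thesis using K1 IH L1 L2 unfolding rep Tr_def ex
      by (simp add: butlast_s algebra_simps)
  next
    case False
    have L1: "\<not> LM x (?R @ [Two])" using False by (auto simp add: LM_def)
    have L2: "\<not> LM (s x) (?R @ [Two])" using False
      by (auto simp add: LM_def last_s sl_def split: letter.splits)
    show ?thesis using K1 L1 L2 unfolding rep Tr_def by simp
  qed
qed



lemma weight_lt_down: "c \<in> down r x \<Longrightarrow> weight c < weight x"
  using weight_down by (metis lessI)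

lemma touch_eq:
  assumes r: "1 \<le> r" and w: "valid_word r w"
    and IH: "\<And>v w. weight v < weight (v' @ [a]) \<Longrightarrow> valid_word r w \<Longrightarrow> KP r w v"
  shows "touchR r w v' a = real r powi (int (twos (v' @ [a])) - int (length w)) * touchR 1 (s w) (s v') (sl a)"
proof (cases "set v' \<subseteq> {Two}")
  case False then show ?thesis by (simp add: touchR_def set_s_Two)
next
  case True
  define k where "k = length v'"
  have v': "v' = replicate k Two" using True allTwo_rep k_def by blast
  let ?R = "replicate k Two"
  have Z: "\<And>x. valid_word r x \<Longrightarrow> real (d r x ?R) = real r powi (int k - int (length x)) * real (d 1 (s x) ?R)"
  proof -
    fix x assume x: "valid_word r x"
    show "real (d r x ?R) = real r powi (int k - int (length x)) * real (d 1 (s x) ?R)"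
    proof (rule Z_of_K[OF r _ x])
      fix v w assume "weight v \<le> 2 * k" "valid_word r w"
      then show "KP r w v" using IH[of v w] v' by (cases a) auto
    qed
  qed
  show ?thesis
  proof (cases a)
    case (One i)
    then show ?thesis using True Z[OF w] v' by (simp add: touchR_def set_s_Two)
  next
    case Two
    have IHj: "\<And>j. Tr r w (?R @ [One j]) = real r powi (int k - int (length w)) * Tr 1 (s w) (?R @ [One 1])"
      using IH[of "?R @ [One _]" w] w v' Two by (simp add: KP_def)
    have dj: "\<And>j. real (d r w (?R @ [One j])) = Tr r w (?R @ [One j])
        + (if w \<noteq> [] \<and> last w = One j then real (d r (butlast w) ?R) else 0)"
      by (simp add: Tr_def LM_def)
    have d1: "real (d 1 (s w) (?R @ [One 1])) = Tr 1 (s w) (?R @ [One 1])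
        + (if w \<noteq> [] \<and> is_one (last w) then real (d 1 (s (butlast w)) ?R) else 0)"
      by (auto simp add: Tr_def LM_def last_s butlast_s sl_def split: letter.splits)
    have sumif: "(\<Sum>j\<in>{1..r}. (if w \<noteq> [] \<and> last w = One j then real (d r (butlast w) ?R) else 0))
        = (if w \<noteq> [] \<and> is_one (last w) then real (d r (butlast w) ?R) else 0)"
    proof (cases "w \<noteq> [] \<and> is_one (last w)")
      case T: True
      then obtain i0 where i0: "last w = One i0" by (cases "last w") auto
      have "last w \<in> set w" using T by simp
      then have "1 \<le> i0 \<and> i0 \<le> r" using w i0 unfolding valid_word_def by fastforce
      then show ?thesis using T i0 by (simp add: sum.delta)
    next
      case F: False
      have z: "\<And>j. (if w \<noteq> [] \<and> last w = One j then real (d r (butlast w) ?R) else 0) = 0"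
        using F by auto
      show ?thesis unfolding z using F by auto
    qed
    have Zb: "w \<noteq> [] \<Longrightarrow> real (d r (butlast w) ?R) = real r powi (int (Suc k) - int (length w)) * real (d 1 (s (butlast w)) ?R)"
    proof -
      assume wn: "w \<noteq> []"
      have e: "int k - int (length (butlast w)) = int (Suc k) - int (length w)" using wn by (cases w) auto
      show ?thesis using Z[OF valid_butlast[OF w]] unfolding e .
    qed
    have pw: "real r * real r powi (int k - int (length w)) = real r powi (int (Suc k) - int (length w))"
    proof -
      have "int (Suc k) - int (length w) = int 1 + (int k - int (length w))" by simp
      then show ?thesis using rpowi_split[OF r, of 1 "int k - int (length w)"] by (simp add: add_diff_eq)
    qed
    have "touchR r w v' a = (\<Sum>j\<in>{1..r}. real (d r w (?R @ [One j])))"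
      using True Two v' by (simp add: touchR_def)
    also have "\<dots> = (\<Sum>j\<in>{1..r}. real r powi (int k - int (length w)) * Tr 1 (s w) (?R @ [One 1]))
        + (\<Sum>j\<in>{1..r}. (if w \<noteq> [] \<and> last w = One j then real (d r (butlast w) ?R) else 0))"
      by (simp add: dj IHj sum.distrib)
    also have "\<dots> = real r powi (int (Suc k) - int (length w)) * real (d 1 (s w) (?R @ [One 1]))"
      unfolding sumif d1 using Zb pw by (auto simp: algebra_simps)
    also have "\<dots> = real r powi (int (twos (v' @ [a])) - int (length w)) * touchR 1 (s w) (s v') (sl a)"
      using True Two v' by (simp add: touchR_def)
    finally show ?thesis .
  qed
qed



lemma K_main:
  assumes r: "1 \<le> r"
  shows "valid_word r w \<Longrightarrow> KP r w v"
proof (induction "weight v" arbitrary: v w rule: less_induct)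
  case less
  show ?case
  proof (cases v rule: rev_cases)
    case Nil
    then show ?thesis by (simp add: KP_def Tr_def LM_def d_Nil_real)
  next
    case (snoc v' a)
    have IH': "\<And>v w. weight v < weight (v' @ [a]) \<Longrightarrow> valid_word r w \<Longrightarrow> KP r w v"
      using less.hyps snoc by blast
    let ?E = "int (twos (v' @ [a])) - int (length w)"
    let ?E1 = "int (twos [a]) - int (length w)"
    have e: "\<And>c. int (twos (c @ [a])) - int (length w) = int (twos c) + ?E1" by simp
    have e2: "?E = int (twos v') + ?E1" by simp
    have "(\<Sum>c\<in>down r v'. Tr r w (c @ [a]))
        = (\<Sum>c\<in>down r v'. real r ^ twos c * (real r powi ?E1 * Tr 1 (s w) (s c @ [sl a])))"
    proof (rule sum.cong)
      fix c assume c: "c \<in> down r v'"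
      have "weight (c @ [a]) < weight (v' @ [a])" using weight_lt_down[OF c] by simp
      then have "KP r w (c @ [a])" using IH' less.prems by blast
      then show "Tr r w (c @ [a]) = real r ^ twos c * (real r powi ?E1 * Tr 1 (s w) (s c @ [sl a]))"
        unfolding KP_def e rpowi_split[OF r] by simp
    qed simp
    also have "\<dots> = real r ^ twos v' * (\<Sum>c\<in>down 1 (s v'). real r powi ?E1 * Tr 1 (s w) (c @ [sl a]))"
      by (rule sum_lift[where x=v' and g="\<lambda>c. real r powi ?E1 * Tr 1 (s w) (c @ [sl a])"])
    also have "\<dots> = real r powi ?E * (\<Sum>c\<in>down 1 (s v'). Tr 1 (s w) (c @ [sl a]))"
      unfolding e2 rpowi_split[OF r] by (simp add: sum_distrib_left mult.assoc)
    finally have sp: "(\<Sum>c\<in>down r v'. Tr r w (c @ [a])) = real r powi ?E * (\<Sum>c\<in>down 1 (s v'). Tr 1 (s w) (c @ [sl a]))" .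
    have tp: "touchR r w v' a = real r powi ?E * touchR 1 (s w) (s v') (sl a)"
      by (rule touch_eq[OF r less.prems IH'])
    have "Tr r w v = real r powi ?E * ((\<Sum>c\<in>down 1 (s v'). Tr 1 (s w) (c @ [sl a])) + touchR 1 (s w) (s v') (sl a))"
      unfolding snoc EqA[of r w v' a] sp tp by (simp add: algebra_simps)
    also have "\<dots> = real r powi ?E * Tr 1 (s w) (s v)"
      using EqA[of 1 "s w" "s v'" "sl a"] unfolding snoc by simp
    finally show ?thesis unfolding KP_def snoc .
  qed
qed



lemma lcp_le: "lcp xs ys \<le> length xs \<and> lcp xs ys \<le> length ys"
  by (induction xs ys rule: lcp.induct) auto

lemma lcp_nth: "i < lcp xs ys \<Longrightarrow> xs ! i = ys ! i"
proof (induction xs ys arbitrary: i rule: lcp.induct)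
  case (1 a as b bs) then show ?case by (cases i) (auto split: if_splits)
qed auto

lemma lcp_neq: "lcp xs ys < length xs \<Longrightarrow> lcp xs ys < length ys \<Longrightarrow> xs ! lcp xs ys \<noteq> ys ! lcp xs ys"
  by (induction xs ys rule: lcp.induct) auto

lemma lcp_sym: "lcp xs ys = lcp ys xs"
  by (induction xs ys rule: lcp.induct) (auto elim: lcp.elims)

lemma twos_e: "twos x + e x = length x"
proof (induction x)
  case (Cons a u) then show ?case by (cases a) (auto simp: e_def)
qed (simp add: e_def)

lemma butlast_cut: "butlast (cut x l) = cut x (Suc l)"
  unfolding cut_def by (cases "l = 0") (auto simp add: butlast_conv_take min_def)

lemma length_cut: "length (cut x l) = length x - l"
  unfolding cut_def by simp

lemma last_cut: "l < length x \<Longrightarrow> last (cut x l) = rev x ! l"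
proof -
  assume l: "l < length x"
  then have "take (length x - l) x \<noteq> []" by (cases x) auto
  then have "last (take (length x - l) x) = take (length x - l) x ! (length x - l - 1)"
    by (simp add: last_conv_nth)
  also have "\<dots> = x ! (length x - Suc l)" using l by simp
  finally show ?thesis unfolding cut_def using l by (simp add: rev_nth)
qed

lemma s_cut: "s (cut x l) = cut (s x) l"
  unfolding cut_def s_def by (simp add: take_map)

lemma Tr_LM: "LM w v \<Longrightarrow> Tr r w v = real (d r w v) - real (d r (butlast w) (butlast v))"
  by (simp add: Tr_def)
lemma Tr_nLM: "\<not> LM w v \<Longrightarrow> Tr r w v = real (d r w v)"
  by (simp add: Tr_def)



lemma valid_cut: "valid_word r x \<Longrightarrow> valid_word r (cut x l)"
  unfolding valid_word_def cut_def by (meson in_set_takeD)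

lemma cut0[simp]: "cut x 0 = x" by (simp add: cut_def)

theorem mainTheorem7:
  fixes r :: nat and w v :: "letter list"
  assumes "r \<ge> 1" and "valid_word r w" and "valid_word r v"
  shows "(ind w v \<longrightarrow>
           real (d r w v) =
             (\<Sum>l\<in>{0..h w v}.
                (real (d 1 (s (cut w l)) (s (cut v l))) - real (d 1 (s (cut w (l+1))) (s (cut v (l+1)))))
                * real r powi (int (nletters v) - int (nletters w) - int (e (cut v l)))))
       \<and> (\<not> ind w v \<longrightarrow>
           real (d r w v) =
             (\<Sum>l\<in>{..<h w v}.
                (real (d 1 (s (cut w l)) (s (cut v l))) - real (d 1 (s (cut w (l+1))) (s (cut v (l+1)))))
                * real r powi (int (nletters v) - int (nletters w) - int (e (cut v l))))
             + real (d 1 (s (strip w v)) (s (strip v w)))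
                * real r powi (int (nletters v) - int (nletters w) - int (e (strip v w))))"
proof -
  note r = assms(1)
  define H where "H = h w v"
  define P where "P l = real r powi (int (nletters v) - int (nletters w) - int (e (cut v l)))" for l
  define D1 where "D1 l = real (d 1 (s (cut w l)) (s (cut v l)))" for l
  have hle: "H \<le> length w" "H \<le> length v"
    using lcp_le[of "rev w" "rev v"] unfolding H_def h_def by auto
  have LMl: "LM (cut w l) (cut v l)" if l: "l < H" for l
  proof -
    have "l < length w" "l < length v" using l hle by auto
    moreover have "rev w ! l = rev v ! l" using lcp_nth[of l "rev w" "rev v"] l unfolding H_def h_def by simp
    ultimately show ?thesis unfolding LM_def
      by (auto simp: last_cut length_cut simp del: length_greater_0_conv dest: arg_cong[of _ _ length])
  qed
  have nLMH: "\<not> LM (cut w H) (cut v H)"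
  proof (cases "H < length w \<and> H < length v")
    case True
    have "rev w ! H \<noteq> rev v ! H" using lcp_neq[of "rev w" "rev v"] True unfolding H_def h_def by simp
    then show ?thesis using True by (simp add: LM_def last_cut)
  next
    case False
    then have "cut w H = [] \<or> cut v H = []" using hle
      by (metis le_neq_implies_less length_0_conv length_cut diff_self_eq_0)
    then show ?thesis by (auto simp: LM_def)
  qed
  have LMs: "LM (s (cut w l)) (s (cut v l))" if l: "l < H" for l
    using LMl[OF l] by (auto simp: LM_def last_s)
  have tele: "n \<le> H \<Longrightarrow> real (d r w v) = (\<Sum>l<n. Tr r (cut w l) (cut v l)) + real (d r (cut w n) (cut v n))" for n
  proof (induction n)
    case 0 then show ?case by simp
  next
    case (Suc n)
    have "Tr r (cut w n) (cut v n) = real (d r (cut w n) (cut v n)) - real (d r (cut w (Suc n)) (cut v (Suc n)))"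
      using Tr_LM[OF LMl[of n]] Suc.prems by (simp add: butlast_cut)
    then show ?case using Suc by simp
  qed
  have d_sum: "real (d r w v) = (\<Sum>l<Suc H. Tr r (cut w l) (cut v l))"
    using tele[of H] Tr_nLM[OF nLMH, of r] by simp
  have Kl: "Tr r (cut w l) (cut v l) = P l * Tr 1 (s (cut w l)) (s (cut v l))" if l: "l \<le> H" for l
  proof -
    have "KP r (cut w l) (cut v l)" using K_main[OF r valid_cut[OF assms(2)]] .
    moreover have "int (twos (cut v l)) - int (length (cut w l)) = int (nletters v) - int (nletters w) - int (e (cut v l))"
      using twos_e[of "cut v l"] l hle unfolding nletters_def by (simp add: length_cut)
    ultimately show ?thesis unfolding KP_def P_def by simp
  qed
  have T1l: "Tr 1 (s (cut w l)) (s (cut v l)) = D1 l - D1 (l + 1)" if l: "l < H" for l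
    using Tr_LM[OF LMs[OF l]] unfolding D1_def by (simp add: butlast_s butlast_cut)
  have indeq: "ind w v = LM (s (cut w H)) (s (cut v H))"
  proof -
    have sw: "strip w v = cut w H" unfolding strip_def cut_def H_def ..
    have sv: "strip v w = cut v H" unfolding strip_def cut_def H_def h_def by (simp add: lcp_sym)
    show ?thesis unfolding ind_def sw sv using nLMH
      by (cases "last (cut w H)"; cases "last (cut v H)") (auto simp: LM_def last_s)
  qed
  have T1H: "Tr 1 (s (cut w H)) (s (cut v H)) = D1 H - (if ind w v then D1 (H + 1) else 0)"
    unfolding indeq D1_def Tr_def by (simp add: butlast_s butlast_cut)
  have main: "real (d r w v) = (\<Sum>l<H. (D1 l - D1 (l + 1)) * P l) + (D1 H - (if ind w v then D1 (H + 1) else 0)) * P H"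
  proof -
    have "real (d r w v) = (\<Sum>l<H. Tr r (cut w l) (cut v l)) + Tr r (cut w H) (cut v H)"
      using d_sum by simp
    also have "(\<Sum>l<H. Tr r (cut w l) (cut v l)) = (\<Sum>l<H. (D1 l - D1 (l + 1)) * P l)"
    proof (rule sum.cong)
      fix l assume "l \<in> {..<H}"
      then have l: "l < H" by simp
      show "Tr r (cut w l) (cut v l) = (D1 l - D1 (l + 1)) * P l"
        using Kl[of l] T1l[OF l] l by simp
    qed simp
    also have "Tr r (cut w H) (cut v H) = (D1 H - (if ind w v then D1 (H + 1) else 0)) * P H"
      using Kl[of H] T1H by simp
    finally show ?thesis .
  qed
  have sw: "strip w v = cut w H" unfolding strip_def cut_def H_def ..
  have sv: "strip v w = cut v H" unfolding strip_def cut_def H_def h_def by (simp add: lcp_sym)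
  show ?thesis
  proof (intro conjI impI)
    assume i: "ind w v"
    have "{0..h w v} = {..<Suc H}" unfolding H_def by auto
    then show "real (d r w v) = (\<Sum>l\<in>{0..h w v}.
                (real (d 1 (s (cut w l)) (s (cut v l))) - real (d 1 (s (cut w (l+1))) (s (cut v (l+1)))))
                * real r powi (int (nletters v) - int (nletters w) - int (e (cut v l))))"
      using main i unfolding D1_def P_def by simp
  next
    assume i: "\<not> ind w v"
    show "real (d r w v) = (\<Sum>l\<in>{..<h w v}.
                (real (d 1 (s (cut w l)) (s (cut v l))) - real (d 1 (s (cut w (l+1))) (s (cut v (l+1)))))
                * real r powi (int (nletters v) - int (nletters w) - int (e (cut v l))))
             + real (d 1 (s (strip w v)) (s (strip v w)))
                * real r powi (int (nletters v) - int (nletters w) - int (e (strip v w)))"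
      using main i unfolding D1_def P_def sw sv H_def by simp
  qed
qed


end
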